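(* Let $R$ be a Noetherian ring, let $N\subsetneq M$ be finitely generated $R$-modules, and let $X=\{P_1,\dots,P_r\}\subseteq\operatorname{Ass}(M/N)=\{P_1,\dots,P_r,P_{r+1},\dots,P_s\}$ (the $P_i$ distinct). Then the following are equivalent: (1) the primary decompositions of $N$ in $M$ are independent over $X$; (2) for any $Q_i,Q_i'\in\Lambda_{P_i}(N\subsetneq M)$, $i=1,\dots,r$, one has $Q_1\cap\cdots\cap Q_r=Q_1'\cap\cdots\cap Q_r'$.
   Context: A submodule $Q\subseteq M$ is $P$-primary if $\operatorname{Ass}(M/Q)=\{P\}$. A primary decomposition of $N$ in $M$ means an irredundant and minimal primary decomposition $N=Q_1\cap\cdots\cap Q_s$ with $Q_i$ being $P_i$-primary, the $P_i$ distinct; $Q_i$ is then called a $P_i$-primary component of $N$ in $M$. For $P\in\operatorname{Ass}(M/N)$, $\Lambda_P(N\subsetneq M)$ is the set of all $P$-primary components of $N$ in $M$ (over all such primary decompositions). The primary decompositions of $N$ in $M$ are called independent over $X=\{P_1,\dots,P_r\}\subseteq \operatorname{Ass}(M/N)$ if for any two primary decompositions $N=Q_1\cap\cdots\cap Q_s=Q_1'\cap\cdots\cap Q_s'$ with $Q_i,Q_i'\in\Lambda_{P_i}(N\subsetneq M)$ for all $i$, one has $Q_1\cap\cdots\cap Q_r=Q_1'\cap\cdots\cap Q_r'$. *)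

theory Defs
  imports Complex_Main
begin

definition is_ideal :: "'a::comm_ring_1 set \<Rightarrow> bool" where
  "is_ideal I \<longleftrightarrow> 0 \<in> I \<and> (\<forall>a\<in>I. \<forall>b\<in>I. a + b \<in> I) \<and> (\<forall>r. \<forall>a\<in>I. r * a \<in> I)"

definition ideal_gen :: "'a::comm_ring_1 set \<Rightarrow> 'a set" where
  "ideal_gen F = \<Inter>{J. is_ideal J \<and> F \<subseteq> J}"

definition is_prime_ideal :: "'a::comm_ring_1 set \<Rightarrow> bool" where
  "is_prime_ideal P \<longleftrightarrow> is_ideal P \<and> P \<noteq> UNIV \<and> (\<forall>a b. a * b \<in> P \<longrightarrow> a \<in> P \<or> b \<in> P)"

definition noetherian_ring :: "'a::comm_ring_1 itself \<Rightarrow> bool" where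
  "noetherian_ring _ \<longleftrightarrow> (\<forall>I::'a set. is_ideal I \<longrightarrow> (\<exists>F. finite F \<and> F \<subseteq> I \<and> I = ideal_gen F))"

section \<open>Modules: submodules M of an ambient module with scalar multiplication s\<close>

definition fin_gen_mod :: "('a::comm_ring_1 \<Rightarrow> 'm::ab_group_add \<Rightarrow> 'm) \<Rightarrow> 'm set \<Rightarrow> bool" where
  "fin_gen_mod s M \<longleftrightarrow> (\<exists>F. finite F \<and> F \<subseteq> M \<and> M = Modules.module.span s F)"

text \<open>Ass(M/N) for submodules N \<subseteq> M: primes of the form (N :_R x) with x \<in> M,
  i.e. annihilators of elements x + N of M/N.\<close>
definition Ass_quot :: "('a::comm_ring_1 \<Rightarrow> 'm::ab_group_add \<Rightarrow> 'm) \<Rightarrow> 'm set \<Rightarrow> 'm set \<Rightarrow> 'a set set" where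
  "Ass_quot s M N = {P. is_prime_ideal P \<and> (\<exists>x\<in>M. P = {r. s r x \<in> N})}"

definition is_primary_sub :: "('a::comm_ring_1 \<Rightarrow> 'm::ab_group_add \<Rightarrow> 'm) \<Rightarrow> 'm set \<Rightarrow> 'a set \<Rightarrow> 'm set \<Rightarrow> bool" where
  "is_primary_sub s M P Q \<longleftrightarrow> Modules.module.subspace s Q \<and> Q \<subseteq> M \<and> Ass_quot s M Q = {P}"

text \<open>A (minimal, irredundant) primary decomposition of N in M: a family Q indexed by a
  finite set S of (hence distinct) primes, Q P being P-primary, with N the intersection,
  and no component can be omitted.\<close>
definition prim_dec :: "('a::comm_ring_1 \<Rightarrow> 'm::ab_group_add \<Rightarrow> 'm) \<Rightarrow> 'm set \<Rightarrow> 'm set \<Rightarrow> 'a set set \<Rightarrow> ('a set \<Rightarrow> 'm set) \<Rightarrow> bool" where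
  "prim_dec s M N S Q \<longleftrightarrow> finite S \<and> S \<noteq> {} \<and>
     (\<forall>P\<in>S. is_primary_sub s M P (Q P)) \<and>
     N = M \<inter> \<Inter>(Q ` S) \<and>
     (\<forall>P\<in>S. M \<inter> \<Inter>(Q ` (S - {P})) \<noteq> N)"

definition Lambda_comp :: "('a::comm_ring_1 \<Rightarrow> 'm::ab_group_add \<Rightarrow> 'm) \<Rightarrow> 'm set \<Rightarrow> 'm set \<Rightarrow> 'a set \<Rightarrow> 'm set set" where
  "Lambda_comp s M N P = {Q P | S Q. prim_dec s M N S Q \<and> P \<in> S}"

definition indep_over :: "('a::comm_ring_1 \<Rightarrow> 'm::ab_group_add \<Rightarrow> 'm) \<Rightarrow> 'm set \<Rightarrow> 'm set \<Rightarrow> 'a set set \<Rightarrow> bool" where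
  "indep_over s M N X \<longleftrightarrow> (\<forall>S Q S' Q'. prim_dec s M N S Q \<and> prim_dec s M N S' Q' \<longrightarrow>
       M \<inter> \<Inter>(Q ` X) = M \<inter> \<Inter>(Q' ` X))"

end

theory Submission
  imports Defs
begin

lemma prime_inter_finite:
  assumes "finite T" "is_prime_ideal P" "\<forall>i\<in>T. is_ideal (I i)" "\<Inter>(I ` T) \<subseteq> P"
  shows "\<exists>i\<in>T. I i \<subseteq> P"
  using assms(1,3,4)
proof (induction T rule: finite_induct)
  case empty
  then show ?case using assms(2) by (auto simp: is_prime_ideal_def)
next
  case (insert j T)
  show ?case
  proof (rule ccontr)
    assume H: "\<not> (\<exists>i\<in>insert j T. I i \<subseteq> P)"
    then obtain a where a: "a \<in> I j" "a \<notin> P" by auto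
    from H insert have "\<not> \<Inter>(I ` T) \<subseteq> P" by auto
    then obtain b where b: "b \<in> \<Inter>(I ` T)" "b \<notin> P" by auto
    have "b * a \<in> I j" using a insert.prems(1) by (auto simp: is_ideal_def)
    hence "a * b \<in> I j" by (simp add: mult.commute)
    moreover have "a * b \<in> I i" if "i \<in> T" for i
      using b that insert.prems(1) by (auto simp: is_ideal_def)
    ultimately have "a * b \<in> P" using insert.prems(2) by auto
    then show False using a b assms(2) by (auto simp: is_prime_ideal_def)
  qed
qed

lemma prime_eq_inter_finite:
  assumes "finite T" "is_prime_ideal P" "\<forall>i\<in>T. is_ideal (I i)" "P = \<Inter>(I ` T)"
  shows "\<exists>i\<in>T. P = I i"
proof -
  obtain i where "i \<in> T" "I i \<subseteq> P" using prime_inter_finite[OF assms(1-3)] assms(4) by auto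
  then show ?thesis using assms(4) by blast
qed

context module
begin

lemma colon_ideal:
  assumes "subspace Q"
  shows "is_ideal {t. scale t z \<in> Q}"
  using assms unfolding is_ideal_def subspace_def
  by (auto simp: scale_left_distrib) (metis scale_scale)

lemma Ass_subset:
  assumes "finite T" "subspace M" "\<forall>P\<in>T. is_primary_sub scale M P (Q P)"
    and "N = M \<inter> \<Inter>(Q ` T)"
  shows "Ass_quot scale M N \<subseteq> T"
proof
  fix P assume "P \<in> Ass_quot scale M N"
  then obtain x where P: "is_prime_ideal P" "x \<in> M" "P = {r. scale r x \<in> N}"
    by (auto simp: Ass_quot_def)
  have xM: "scale r x \<in> M" for r using P(2) assms(2) by (auto simp: subspace_def)
  have "P = \<Inter>((\<lambda>i. {r. scale r x \<in> Q i}) ` T)"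
    using P(3) assms(4) xM by auto
  moreover have "\<forall>i\<in>T. is_ideal {r. scale r x \<in> Q i}"
    using assms(3) colon_ideal by (auto simp: is_primary_sub_def)
  ultimately have "\<exists>i\<in>T. P = {r. scale r x \<in> Q i}"
    by (intro prime_eq_inter_finite[OF assms(1) P(1)])
  then obtain i where i: "i \<in> T" "P = {r. scale r x \<in> Q i}" by blast
  then have "P \<in> Ass_quot scale M (Q i)" using P by (auto simp: Ass_quot_def)
  then show "P \<in> T" using i assms(3) by (auto simp: is_primary_sub_def)
qed

lemma ideal_gen_sub: "is_ideal J \<Longrightarrow> F \<subseteq> J \<Longrightarrow> ideal_gen F \<subseteq> J"
  unfolding ideal_gen_def by auto

lemma noeth_max:
  fixes A :: "'a set set"
  assumes noeth: "noetherian_ring TYPE('a)" and ne: "A \<noteq> {}" and id: "\<forall>I\<in>A. is_ideal I"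
  shows "\<exists>M\<in>A. \<forall>X\<in>A. M \<subseteq> X \<longrightarrow> X = M"
proof (rule subset_Zorn)
  fix C assume ch: "subset.chain A C"
  show "\<exists>U\<in>A. \<forall>X\<in>C. X \<subseteq> U"
  proof (cases "C = {}")
    case True then show ?thesis using ne by auto
  next
    case False
    have CA: "C \<subseteq> A" and tot: "\<forall>X\<in>C. \<forall>Y\<in>C. X \<subseteq> Y \<or> Y \<subseteq> X"
      using ch by (auto simp: subset_chain_def)
    have "is_ideal (\<Union>C)"
      unfolding is_ideal_def
    proof (intro conjI ballI allI)
      show "0 \<in> \<Union>C" using False CA id by (auto simp: is_ideal_def)
    next
      fix a b assume "a \<in> \<Union>C" "b \<in> \<Union>C"
      then obtain X Y where "X \<in> C" "Y \<in> C" "a \<in> X" "b \<in> Y" by auto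
      have XY: "X \<subseteq> Y \<or> Y \<subseteq> X" using tot \<open>X \<in> C\<close> \<open>Y \<in> C\<close> by simp
      have "\<exists>Z\<in>C. a \<in> Z \<and> b \<in> Z"
      proof (rule disjE[OF XY])
        assume "X \<subseteq> Y" then show ?thesis using \<open>Y \<in> C\<close> \<open>a \<in> X\<close> \<open>b \<in> Y\<close> by auto
      next
        assume "Y \<subseteq> X" then show ?thesis using \<open>X \<in> C\<close> \<open>a \<in> X\<close> \<open>b \<in> Y\<close> by auto
      qed
      then obtain Z where Z: "Z \<in> C" "a \<in> Z" "b \<in> Z" by blast
      then have "is_ideal Z" using CA id by blast
      then have "a + b \<in> Z" using Z unfolding is_ideal_def by blast
      then show "a + b \<in> \<Union>C" using Z by blast
    next
      fix r a assume "a \<in> \<Union>C"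
      then obtain Z where Z: "Z \<in> C" "a \<in> Z" by auto
      then have "is_ideal Z" using CA id by blast
      then have "r * a \<in> Z" using Z unfolding is_ideal_def by blast
      then show "r * a \<in> \<Union>C" using Z by blast
    qed
    note UI = this
    have nI: "\<forall>I::'a set. is_ideal I \<longrightarrow> (\<exists>F. finite F \<and> F \<subseteq> I \<and> I = ideal_gen F)"
      using noeth unfolding noetherian_ring_def by simp
    have "\<exists>F. finite F \<and> F \<subseteq> \<Union>C \<and> \<Union>C = ideal_gen F"
      using mp[OF spec[OF nI] UI] .
    then obtain F where F0: "finite F \<and> F \<subseteq> \<Union>C \<and> \<Union>C = ideal_gen F" ..
    have F1: "finite F" using F0 by blast
    have F2: "F \<subseteq> \<Union>C" using F0 by blast
    have F3: "\<Union>C = ideal_gen F" using F0 by blast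
    note F = F1 F2 F3
    obtain B where B: "B \<in> C" "F \<subseteq> B"
      using finite_subset_Union_chain[OF F(1) F(2) False ch] by blast
    have "is_ideal B" using B(1) CA id by blast
    then have "\<Union>C \<subseteq> B" using F(3) ideal_gen_sub[OF _ B(2)] by simp
    then show ?thesis using B(1) CA by auto
  qed
qed

lemma noeth_assoc:
  assumes noeth: "noetherian_ring TYPE('a)" and N: "subspace N" and y: "y \<notin> N"
  shows "\<exists>z. z \<notin> N \<and> is_prime_ideal {t. scale t z \<in> N} \<and> (\<forall>Q. subspace Q \<longrightarrow> y \<in> Q \<longrightarrow> z \<in> Q)"
proof -
  define A where "A = {{t. scale t z \<in> N} | z. z \<notin> N \<and> (\<exists>r. z = scale r y)}"
  have "y = scale 1 y" by simp
  hence "{t. scale t y \<in> N} \<in> A" using y unfolding A_def by blast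
  hence "A \<noteq> {}" by blast
  moreover have "\<forall>I\<in>A. is_ideal I" using colon_ideal[OF N] unfolding A_def by blast
  ultimately obtain I where I: "I \<in> A" and mx: "\<forall>X\<in>A. I \<subseteq> X \<longrightarrow> X = I"
    using noeth_max[OF noeth] by blast
  then obtain z r where zN: "z \<notin> N" and zr: "z = scale r y" and Iz: "I = {t. scale t z \<in> N}"
    unfolding A_def by blast
  have pI: "is_prime_ideal I"
    unfolding is_prime_ideal_def
  proof (intro conjI allI impI)
    show "is_ideal I" using Iz colon_ideal[OF N] by simp
    show "I \<noteq> UNIV"
    proof
      assume "I = UNIV"
      hence "scale 1 z \<in> N" using Iz by blast
      thus False using zN by simp
    qed
  next
    fix a b assume ab: "a * b \<in> I"
    show "a \<in> I \<or> b \<in> I"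
    proof (rule ccontr)
      assume "\<not> (a \<in> I \<or> b \<in> I)"
      hence na: "scale a z \<notin> N" and nb: "b \<notin> I" using Iz by auto
      define J where "J = {t. scale t (scale a z) \<in> N}"
      have "scale a z = scale (a * r) y" using zr by simp
      have "\<exists>r'. scale a z = scale r' y" by (rule exI[of _ "a * r"]) (simp add: zr)
      hence "J \<in> A" unfolding A_def J_def
        by (intro CollectI exI[of _ "scale a z"] conjI refl na)
      moreover have "I \<subseteq> J"
      proof
        fix t assume "t \<in> I"
        hence "scale t z \<in> N" using Iz by simp
        hence "scale a (scale t z) \<in> N" using N unfolding subspace_def by blast
        moreover have "scale a (scale t z) = scale t (scale a z)" by (simp add: mult.commute)
        ultimately show "t \<in> J" unfolding J_def by simp
      qed
      ultimately have "J = I" using mx by auto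
      moreover have "scale a (scale b z) = scale b (scale a z)" by (simp add: mult.commute)
      hence "b \<in> J" using ab Iz unfolding J_def by simp
      ultimately show False using nb by simp
    qed
  qed
  have zQ: "\<forall>Q. subspace Q \<longrightarrow> y \<in> Q \<longrightarrow> z \<in> Q" using zr by (auto simp: subspace_def)
  have pz: "is_prime_ideal {t. scale t z \<in> N}" using pI Iz by simp
  show ?thesis by (intro exI[of _ z] conjI zN pz zQ)
qed

lemma prim_dec_Ass:
  assumes noeth: "noetherian_ring TYPE('a)" and M: "subspace M" and N: "subspace N"
    and pd: "prim_dec scale M N S Q" and P1: "P1 \<in> S"
  shows "P1 \<in> Ass_quot scale M N"
proof -
  from pd have fin: "finite S" and prim: "\<forall>P\<in>S. is_primary_sub scale M P (Q P)"
    and eq: "N = M \<inter> \<Inter>(Q ` S)" and irr: "M \<inter> \<Inter>(Q ` (S - {P1})) \<noteq> N"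
    using P1 by (auto simp: prim_dec_def)
  have "N \<subseteq> M \<inter> \<Inter>(Q ` (S - {P1}))" using eq by auto
  with irr obtain y where y: "y \<in> M \<inter> \<Inter>(Q ` (S - {P1}))" "y \<notin> N" by blast
  obtain z where r: "z \<notin> N" "is_prime_ideal {t. scale t z \<in> N}" and zQ: "\<forall>Q. subspace Q \<longrightarrow> y \<in> Q \<longrightarrow> z \<in> Q"
    using noeth_assoc[OF noeth N y(2)] by blast
  have zin: "z \<in> M" "\<forall>P\<in>S - {P1}. z \<in> Q P"
    using y M prim zQ by (auto simp: is_primary_sub_def)
  have "\<forall>P\<in>S. \<forall>t. scale t z \<in> M \<and> (P \<noteq> P1 \<longrightarrow> scale t z \<in> Q P)"
    using zin M prim by (auto simp: subspace_def is_primary_sub_def)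
  hence col: "{t. scale t z \<in> N} = {t. scale t z \<in> Q P1}"
    using eq P1 by auto
  hence "{t. scale t z \<in> Q P1} \<in> Ass_quot scale M (Q P1)"
    using r zin unfolding Ass_quot_def by auto
  hence "{t. scale t z \<in> Q P1} = P1" using prim P1 by (auto simp: is_primary_sub_def)
  then show ?thesis using col r zin unfolding Ass_quot_def by auto
qed

lemma exchange:
  assumes noeth: "noetherian_ring TYPE('a)" and M: "subspace M" and N: "subspace N"
    and pd: "prim_dec scale M N S Q0" and L: "\<forall>P\<in>S. Q1 P \<in> Lambda_comp scale M N P"
  shows "prim_dec scale M N S Q1"
proof -
  from pd have fin: "finite S" and ne: "S \<noteq> {}" and prim0: "\<forall>P\<in>S. is_primary_sub scale M P (Q0 P)"
    and eq0: "N = M \<inter> \<Inter>(Q0 ` S)" by (auto simp: prim_dec_def)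
  have AssS: "Ass_quot scale M N \<subseteq> S" using Ass_subset[OF fin M prim0 eq0] .
  have comp: "\<exists>S' R. prim_dec scale M N S' R \<and> P \<in> S' \<and> Q1 P = R P" if "P \<in> S" for P
    using L that unfolding Lambda_comp_def by blast
  have prim1: "\<forall>P\<in>S. is_primary_sub scale M P (Q1 P)"
    using comp unfolding prim_dec_def by metis
  have Nsub: "N \<subseteq> Q1 P" if "P \<in> S" for P
    using comp[OF that] by (auto simp: prim_dec_def)
  have NM: "N \<subseteq> M" using eq0 by auto
  have eq1: "N = M \<inter> \<Inter>(Q1 ` S)"
  proof (rule ccontr)
    assume "N \<noteq> M \<inter> \<Inter>(Q1 ` S)"
    with Nsub NM obtain y where y: "y \<in> M \<inter> \<Inter>(Q1 ` S)" "y \<notin> N" by blast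
    obtain z where r: "z \<notin> N" "is_prime_ideal {t. scale t z \<in> N}" and zQ: "\<forall>Q. subspace Q \<longrightarrow> y \<in> Q \<longrightarrow> z \<in> Q"
      using noeth_assoc[OF noeth N y(2)] by blast
    define P0 where "P0 = {t. scale t z \<in> N}"
    have zin: "z \<in> M" "\<forall>P\<in>S. z \<in> Q1 P"
      using y M prim1 zQ by (auto simp: is_primary_sub_def)
    have "P0 \<in> Ass_quot scale M N" using r zin unfolding Ass_quot_def P0_def by auto
    hence P0S: "P0 \<in> S" using AssS by auto
    obtain S' R where R: "prim_dec scale M N S' R" "P0 \<in> S'" "Q1 P0 = R P0"
      using comp[OF P0S] by blast
    from R(1) have fin': "finite S'" and prim': "\<forall>P\<in>S'. is_primary_sub scale M P (R P)"
      and eq': "N = M \<inter> \<Inter>(R ` S')" by (auto simp: prim_dec_def)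
    have zR: "z \<in> R P0" using zin P0S R by auto
    have sR: "\<forall>t. scale t z \<in> R P0" using zR prim' R(2)
      by (auto simp: subspace_def is_primary_sub_def)
    have sM: "\<forall>t. scale t z \<in> M" using zin M by (auto simp: subspace_def)
    have memP0: "t \<in> P0 \<longleftrightarrow> (\<forall>P\<in>S'. scale t z \<in> R P)" for t
      unfolding P0_def using eq' sM by auto
    have eqP0: "P0 = \<Inter>((\<lambda>P. {t. scale t z \<in> R P}) ` (S' - {P0}))"
      using memP0 sR R(2) by auto
    have idl: "\<forall>P\<in>S' - {P0}. is_ideal {t. scale t z \<in> R P}"
      using prim' colon_ideal by (auto simp: is_primary_sub_def)
    have pP0: "is_prime_ideal P0" using r(2) unfolding P0_def .
    have fin'': "finite (S' - {P0})" using fin' by simp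
    have "\<exists>P\<in>S' - {P0}. P0 = {t. scale t z \<in> R P}"
      by (rule prime_eq_inter_finite[OF fin'' pP0 idl eqP0])
    then obtain P where P: "P \<in> S' - {P0}" "P0 = {t. scale t z \<in> R P}" by blast
    hence "P0 \<in> Ass_quot scale M (R P)"
      using zin \<open>is_prime_ideal P0\<close> unfolding Ass_quot_def by auto
    hence "P0 = P" using prim' P by (auto simp: is_primary_sub_def)
    then show False using P by auto
  qed
  have irr: "M \<inter> \<Inter>(Q1 ` (S - {P})) \<noteq> N" if P: "P \<in> S" for P
  proof
    assume e: "M \<inter> \<Inter>(Q1 ` (S - {P})) = N"
    have "Ass_quot scale M N \<subseteq> S - {P}"
      using Ass_subset[of "S - {P}" M Q1 N] fin M prim1 e by auto
    moreover have "P \<in> Ass_quot scale M N" using prim_dec_Ass[OF noeth M N pd P] .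
    ultimately show False by auto
  qed
  show ?thesis unfolding prim_dec_def using fin ne prim1 eq1 irr by blast
qed

end

theorem lemma2p1:
  fixes s :: "'a::comm_ring_1 \<Rightarrow> 'm::ab_group_add \<Rightarrow> 'm"
    and M N :: "'m set" and X :: "'a set set"
  assumes "noetherian_ring TYPE('a)"
    and "module s"
    and "Modules.module.subspace s M" and "Modules.module.subspace s N"
    and "fin_gen_mod s M" and "fin_gen_mod s N"
    and "N \<subset> M"
    and "X \<subseteq> Ass_quot s M N"
  shows "indep_over s M N X \<longleftrightarrow>
    (\<forall>Q Q'. (\<forall>P\<in>X. Q P \<in> Lambda_comp s M N P \<and> Q' P \<in> Lambda_comp s M N P) \<longrightarrow>
       M \<inter> \<Inter>(Q ` X) = M \<inter> \<Inter>(Q' ` X))"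
proof -
  interpret module s by fact
  have XS: "X \<subseteq> S" if "prim_dec s M N S Q" for S Q
    using Ass_subset[of S M Q N] that assms(3,8) by (auto simp: prim_dec_def)
  show ?thesis
  proof
    assume ind: "indep_over s M N X"
    show "\<forall>Q Q'. (\<forall>P\<in>X. Q P \<in> Lambda_comp s M N P \<and> Q' P \<in> Lambda_comp s M N P) \<longrightarrow>
       M \<inter> \<Inter>(Q ` X) = M \<inter> \<Inter>(Q' ` X)"
    proof (intro allI impI)
      fix Q Q' assume H: "\<forall>P\<in>X. Q P \<in> Lambda_comp s M N P \<and> Q' P \<in> Lambda_comp s M N P"
      show "M \<inter> \<Inter>(Q ` X) = M \<inter> \<Inter>(Q' ` X)"
      proof (cases "X = {}")
        case True then show ?thesis by simp
      next
        case False
        then obtain P where "P \<in> X" by auto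
        with H obtain S0 Q0 where pd0: "prim_dec s M N S0 Q0"
          unfolding Lambda_comp_def by blast
        have X0: "X \<subseteq> S0" using XS[OF pd0] .
        have self: "Q0 P \<in> Lambda_comp s M N P" if "P \<in> S0" for P
          using pd0 that unfolding Lambda_comp_def by blast
        define Q1 where "Q1 = (\<lambda>P. if P \<in> X then Q P else Q0 P)"
        define Q2 where "Q2 = (\<lambda>P. if P \<in> X then Q' P else Q0 P)"
        have pd1: "prim_dec s M N S0 Q1"
        proof (rule exchange[OF assms(1,3,4) pd0])
          show "\<forall>P\<in>S0. Q1 P \<in> Lambda_comp s M N P"
          proof
            fix P assume "P \<in> S0"
            show "Q1 P \<in> Lambda_comp s M N P"
            proof (cases "P \<in> X")
              case True then show ?thesis using H unfolding Q1_def by simp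
            next
              case False then show ?thesis using self[OF \<open>P \<in> S0\<close>] unfolding Q1_def by simp
            qed
          qed
        qed
        have pd2: "prim_dec s M N S0 Q2"
        proof (rule exchange[OF assms(1,3,4) pd0])
          show "\<forall>P\<in>S0. Q2 P \<in> Lambda_comp s M N P"
          proof
            fix P assume "P \<in> S0"
            show "Q2 P \<in> Lambda_comp s M N P"
            proof (cases "P \<in> X")
              case True then show ?thesis using H unfolding Q2_def by simp
            next
              case False then show ?thesis using self[OF \<open>P \<in> S0\<close>] unfolding Q2_def by simp
            qed
          qed
        qed
        have "M \<inter> \<Inter>(Q1 ` X) = M \<inter> \<Inter>(Q2 ` X)"
          using ind[unfolded indep_over_def, rule_format, OF conjI[OF pd1 pd2]] .
        moreover have "Q1 ` X = Q ` X" "Q2 ` X = Q' ` X" unfolding Q1_def Q2_def by auto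
        ultimately show ?thesis by simp
      qed
    qed
  next
    assume H: "\<forall>Q Q'. (\<forall>P\<in>X. Q P \<in> Lambda_comp s M N P \<and> Q' P \<in> Lambda_comp s M N P) \<longrightarrow>
       M \<inter> \<Inter>(Q ` X) = M \<inter> \<Inter>(Q' ` X)"
    show "indep_over s M N X"
      unfolding indep_over_def
    proof (intro allI impI)
      fix S Q S' Q' assume pd: "prim_dec s M N S Q \<and> prim_dec s M N S' Q'"
      have "\<forall>P\<in>X. Q P \<in> Lambda_comp s M N P \<and> Q' P \<in> Lambda_comp s M N P"
        using pd XS unfolding Lambda_comp_def by blast
      then show "M \<inter> \<Inter>(Q ` X) = M \<inter> \<Inter>(Q' ` X)" using H[rule_format] by simp
    qed
  qed
qed

end
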